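(* Let $X$ be an uncountable regular open Whyburn space. Then $X$ is $\mathcal{K}$-Lindel\"{o}f if and only if $X$ is a Lusin space.
   Context: A space $X$ is open Whyburn if for every open set $A\subseteq X$ and every point $x\in\overline{A}\setminus A$ there is an open set $B\subseteq A$ with $\overline{B}\setminus A=\{x\}$. $\mathcal{K}$ denotes the collection of all families $\mathcal{U}$ of open subsets of $X$ such that $X=\bigcup\{\overline{U}:U\in\mathcal{U}\}$. $X$ is $\mathcal{K}$-Lindel\"{o}f if every $\mathcal{U}\in\mathcal{K}$ has a countable subfamily belonging to $\mathcal{K}$. A Hausdorff space $X$ is a Lusin space (in the sense of Kunen) if (a) every nowhere dense subset of $X$ is countable, (b) $X$ has at most countably many isolated points, and (c) $X$ is uncountable. *)

theory Defs
  imports "HOL-Analysis.Analysis"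
begin

definition open_Whyburn :: "'a topology \<Rightarrow> bool" where
  "open_Whyburn X \<longleftrightarrow>
     (\<forall>A x. openin X A \<and> x \<in> (X closure_of A) - A \<longrightarrow>
        (\<exists>B. openin X B \<and> B \<subseteq> A \<and> (X closure_of B) - A = {x}))"

definition K_family :: "'a topology \<Rightarrow> 'a set set \<Rightarrow> bool" where
  "K_family X \<U> \<longleftrightarrow> (\<forall>U\<in>\<U>. openin X U) \<and> topspace X = \<Union>{X closure_of U | U. U \<in> \<U>}"

definition K_Lindelof :: "'a topology \<Rightarrow> bool" where
  "K_Lindelof X \<longleftrightarrow>
     (\<forall>\<U>. K_family X \<U> \<longrightarrow> (\<exists>\<V>. \<V> \<subseteq> \<U> \<and> countable \<V> \<and> K_family X \<V>))"

definition nowhere_dense_in :: "'a topology \<Rightarrow> 'a set \<Rightarrow> bool" where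
  "nowhere_dense_in X A \<longleftrightarrow> A \<subseteq> topspace X \<and> X interior_of (X closure_of A) = {}"

definition isolated_points :: "'a topology \<Rightarrow> 'a set" where
  "isolated_points X = {x \<in> topspace X. openin X {x}}"

definition Lusin_space :: "'a topology \<Rightarrow> bool" where
  "Lusin_space X \<longleftrightarrow> Hausdorff_space X
     \<and> (\<forall>A. nowhere_dense_in X A \<longrightarrow> countable A)
     \<and> countable (isolated_points X)
     \<and> uncountable (topspace X)"

end

theory Submission imports Defs begin

lemma subsing_countable: "(\<forall>x\<in>S. \<forall>y\<in>S. x = y) \<Longrightarrow> countable S"
proof (cases "S = {}")
  case False
  assume h: "\<forall>x\<in>S. \<forall>y\<in>S. x = y"
  then obtain a where "a \<in> S" using False by blast
  then have "S = {a}" using h by blast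
  then show ?thesis by simp
qed simp

lemma closure_nbhd: "x \<in> X closure_of S \<Longrightarrow> openin X T \<Longrightarrow> x \<in> T \<Longrightarrow> \<exists>y\<in>S. y \<in> T"
  by (auto simp: in_closure_of)

lemma isolated_in_closure: "openin X {y} \<Longrightarrow> y \<in> X closure_of S \<Longrightarrow> y \<in> S"
  using closure_nbhd by fastforce

lemma nowhere_dense_countable:
  assumes KL: "K_Lindelof X" and reg: "regular_space X" and W: "open_Whyburn X"
    and nd: "nowhere_dense_in X A"
  shows "countable A"
proof -
  define F where "F = X closure_of A"
  define G where "G = topspace X - F"
  have AF: "A \<subseteq> F" using nd unfolding F_def nowhere_dense_in_def by (simp add: closure_of_subset)
  have intF: "X interior_of F = {}" using nd unfolding F_def nowhere_dense_in_def by simp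
  have Fcl: "closedin X F" unfolding F_def by simp
  have Gop: "openin X G" unfolding G_def using Fcl by blast
  have clG: "X closure_of G = topspace X" unfolding G_def closure_of_complement intF by simp
  define U where "U = {B. openin X B \<and> (\<forall>x\<in>X closure_of B \<inter> F. \<forall>y\<in>X closure_of B \<inter> F. x = y)}"
  have "K_family X U"
    unfolding K_family_def
  proof (intro conjI)
    show "\<forall>B\<in>U. openin X B" unfolding U_def by blast
    show "topspace X = \<Union>{X closure_of B |B. B \<in> U}"
    proof (rule subset_antisym)
      show "topspace X \<subseteq> \<Union>{X closure_of B |B. B \<in> U}"
      proof
        fix z assume z: "z \<in> topspace X"
        show "z \<in> \<Union>{X closure_of B |B. B \<in> U}"
        proof (cases "z \<in> F")
          case True
          then have "z \<in> X closure_of G - G" using clG z G_def by blast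
          then obtain B where B: "openin X B" "B \<subseteq> G" "X closure_of B - G = {z}"
            using W Gop unfolding open_Whyburn_def by blast
          have "X closure_of B \<inter> F = {z}" using B(3) closure_of_subset_topspace[of X B]
            unfolding G_def by blast
          then have "B \<in> U" using B(1) unfolding U_def by auto
          moreover have "z \<in> X closure_of B" using B(3) by blast
          ultimately show ?thesis by blast
        next
          case False
          then obtain V where V: "openin X V" "z \<in> V" "disjnt F (X closure_of V)"
            using reg z Fcl unfolding regular_space by blast
          then have "V \<in> U" unfolding U_def by (auto simp: disjnt_iff)
          moreover have "z \<in> X closure_of V" using V z by (meson closure_of_subset openin_subset subsetD)
          ultimately show ?thesis by blast
        qed
      qed
      show "\<Union>{X closure_of B |B. B \<in> U} \<subseteq> topspace X"
        by (auto dest: closure_of_subset_topspace[THEN subsetD])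
    qed
  qed
  then obtain V where V: "V \<subseteq> U" "countable V" "K_family X V"
    using KL unfolding K_Lindelof_def by blast
  have "F \<subseteq> (\<Union>B\<in>V. X closure_of B \<inter> F)"
  proof
    fix x assume "x \<in> F"
    then have "x \<in> topspace X" using Fcl closedin_subset by blast
    then obtain B where "B \<in> V" "x \<in> X closure_of B"
      using V(3) unfolding K_family_def by blast
    then show "x \<in> (\<Union>B\<in>V. X closure_of B \<inter> F)" using \<open>x \<in> F\<close> by blast
  qed
  moreover have "countable (\<Union>B\<in>V. X closure_of B \<inter> F)"
  proof (rule countable_UN[OF V(2)])
    fix B assume "B \<in> V"
    then have "B \<in> U" using V(1) by blast
    then show "countable (X closure_of B \<inter> F)" unfolding U_def by (auto intro: subsing_countable)
  qed
  ultimately have "countable F" by (rule countable_subset)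
  then show ?thesis using AF by (rule countable_subset[rotated])
qed

lemma isolated_countable:
  assumes KL: "K_Lindelof X" and reg: "regular_space X" and W: "open_Whyburn X"
    and H: "Hausdorff_space X"
  shows "countable (isolated_points X)"
proof (rule ccontr)
  assume unc: "uncountable (isolated_points X)"
  define I where "I = isolated_points X"
  have Iiso: "\<And>y. y \<in> I \<Longrightarrow> openin X {y}" unfolding I_def isolated_points_def by blast
  have Itop: "I \<subseteq> topspace X" unfolding I_def isolated_points_def by blast
  have Iop: "openin X I"
  proof -
    have "openin X (\<Union>y\<in>I. {y})" using Iiso by (intro openin_Union) auto
    then show ?thesis by simp
  qed
  have t1: "t1_space X" using H Hausdorff_imp_t1_space by blast
  define F where "F = X closure_of I - I"
  have Fcl: "closedin X F" unfolding F_def using Iop by (intro closedin_diff) auto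
  have "X interior_of F = {}"
  proof (rule ccontr)
    assume "X interior_of F \<noteq> {}"
    then obtain z where z: "z \<in> X interior_of F" by blast
    have "z \<in> X closure_of I" using z interior_of_subset F_def by fastforce
    then obtain y where "y \<in> I" "y \<in> X interior_of F" using closure_nbhd[of z X I "X interior_of F"] z by auto
    then show False using interior_of_subset[of X F] F_def by blast
  qed
  then have "nowhere_dense_in X F"
    unfolding nowhere_dense_in_def using Fcl closure_of_closedin closedin_subset by metis
  then have Fc: "countable F" using nowhere_dense_countable KL reg W by blast
  have infI: "infinite I" using unc I_def countable_finite by blast
  obtain g where g: "bij_betw g (I \<times> I) I"
    using card_of_ordIso[THEN iffD2, OF card_of_Times_same_infinite[OF infI]] by blast
  define J where "J = (\<lambda>i. g ` ({i} \<times> I))"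
  have Jsub: "J i \<subseteq> I" if "i \<in> I" for i using g that unfolding J_def bij_betw_def by auto
  have Jdisj: "J i \<inter> J k = {}" if "i \<in> I" "k \<in> I" "i \<noteq> k" for i k
    using g that unfolding J_def bij_betw_def inj_on_def by blast
  have Junc: "uncountable (J i)" if "i \<in> I" for i
  proof
    assume "countable (J i)"
    moreover have "inj_on (\<lambda>y. g (i, y)) I" using g that unfolding bij_betw_def inj_on_def by auto
    moreover have "(\<lambda>y. g (i, y)) ` I = J i" unfolding J_def by auto
    ultimately have "countable I" by (metis countable_image_inj_on)
    then show False using unc I_def by simp
  qed
  define Bad where "Bad = (\<lambda>x. {i \<in> I. x \<notin> X closure_of (I - J i)})"
  have "countable (Bad x)" if "x \<in> F" for x
  proof (rule subsing_countable, intro ballI, rule ccontr)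
    fix i k assume ik: "i \<in> Bad x" "k \<in> Bad x" "i \<noteq> k"
    then have "(I - J i) \<union> (I - J k) = I" using Jdisj[of i k] Bad_def by auto
    then have "X closure_of I = X closure_of (I - J i) \<union> X closure_of (I - J k)"
      by (metis closure_of_Un)
    then show False using ik that F_def Bad_def by auto
  qed
  then have "countable (\<Union>x\<in>F. Bad x)" using Fc by blast
  then obtain i where i: "i \<in> I" "i \<notin> (\<Union>x\<in>F. Bad x)" using unc I_def
    by (metis countable_subset subsetI)
  define K where "K = J i"
  have KI: "K \<subseteq> I" using Jsub i K_def by blast
  have Kunc: "uncountable K" unfolding K_def using Junc[OF i(1)] .
  have Kgood: "x \<in> X closure_of (I - K)" if "x \<in> F" for x
  proof -
    have "i \<notin> Bad x" using i(2) that by blast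
    then show ?thesis using i(1) unfolding Bad_def K_def by blast
  qed
  define Ob where "Ob = topspace X - X closure_of K"
  have Oop: "openin X Ob" unfolding Ob_def by (intro openin_diff) auto
  have IKO: "I - K \<subseteq> Ob"
  proof
    fix y assume y: "y \<in> I - K"
    then have "y \<notin> X closure_of K" using isolated_in_closure[OF Iiso[of y]] by blast
    then show "y \<in> Ob" using Itop y unfolding Ob_def by blast
  qed
  define U where "U = (\<lambda>y. {y}) ` K \<union> {Ob}"
  have "K_family X U"
    unfolding K_family_def
  proof (intro conjI)
    show "\<forall>B\<in>U. openin X B"
    proof
      fix B assume "B \<in> U"
      then show "openin X B" unfolding U_def using Oop Iiso KI by auto
    qed
    show "topspace X = \<Union>{X closure_of B |B. B \<in> U}"
    proof (rule subset_antisym)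
      show "topspace X \<subseteq> \<Union>{X closure_of B |B. B \<in> U}"
      proof
        fix z assume z: "z \<in> topspace X"
        have mem: "X closure_of B \<subseteq> \<Union>{X closure_of B |B. B \<in> U}" if "B \<in> U" for B
          using that by blast
        show "z \<in> \<Union>{X closure_of B |B. B \<in> U}"
        proof (cases "z \<in> K")
          case True
          then have "{z} \<in> U" unfolding U_def by blast
          moreover have "z \<in> X closure_of {z}" using z closure_of_subset[of "{z}" X] by auto
          ultimately show ?thesis using mem by blast
        next
          case nK: False
          have "Ob \<in> U" unfolding U_def by blast
          moreover have "z \<in> X closure_of Ob"
          proof (cases "z \<in> X closure_of K")
            case True
            have "z \<notin> I" using isolated_in_closure[of X z K] True nK Iiso by blast
            moreover have "z \<in> X closure_of I" using True closure_of_mono[OF KI] by blast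
            ultimately have "z \<in> F" unfolding F_def by blast
            then have "z \<in> X closure_of (I - K)" by (rule Kgood)
            then show ?thesis using closure_of_mono[OF IKO] by blast
          next
            case False
            then have "z \<in> Ob" using z unfolding Ob_def by blast
            then show ?thesis using closure_of_subset[OF openin_subset[OF Oop]] by blast
          qed
          ultimately show ?thesis using mem by blast
        qed
      qed
      show "\<Union>{X closure_of B |B. B \<in> U} \<subseteq> topspace X"
        by (auto dest: closure_of_subset_topspace[THEN subsetD])
    qed
  qed
  then obtain V where V: "V \<subseteq> U" "countable V" "K_family X V"
    using KL unfolding K_Lindelof_def by blast
  have "K \<subseteq> (\<Union>B\<in>V - {Ob}. B)"
  proof
    fix y assume y: "y \<in> K"
    then have "y \<in> topspace X" using KI Itop by blast
    then obtain B where B: "B \<in> V" "y \<in> X closure_of B"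
      using V(3) unfolding K_family_def by blast
    have "B \<noteq> Ob"
    proof
      assume "B = Ob"
      then obtain w where "w \<in> Ob" "w \<in> {y}" using closure_nbhd[OF B(2) Iiso[of y]] y KI by blast
      have "y \<in> X closure_of K" using closure_of_subset[of K X] KI Itop y by blast
      then show False using \<open>w \<in> Ob\<close> \<open>w \<in> {y}\<close> unfolding Ob_def by blast
    qed
    have "B \<in> (\<lambda>y. {y}) ` K" using B(1) V(1) \<open>B \<noteq> Ob\<close> unfolding U_def by blast
    then obtain y' where y': "y' \<in> K" "B = {y'}" by blast
    have "closedin X B" using t1 y' KI Itop unfolding t1_space_closedin_singleton by blast
    then have "y \<in> B" using B(2) closure_of_closedin by metis
    then show "y \<in> (\<Union>B\<in>V - {Ob}. B)" using B(1) \<open>B \<noteq> Ob\<close> by blast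
  qed
  moreover have "countable (\<Union>B\<in>V - {Ob}. B)"
  proof (rule countable_UN)
    show "countable (V - {Ob})" using V(2) by simp
  next
    fix B assume "B \<in> V - {Ob}"
    then show "countable B" using V(1) U_def by auto
  qed
  ultimately have "countable K" by (rule countable_subset)
  then show False using Kunc by simp
qed

lemma Lusin_ccc:
  assumes L: "Lusin_space X" and pd: "pairwise disjnt \<D>"
    and op: "\<And>D. D \<in> \<D> \<Longrightarrow> openin X D \<and> D \<noteq> {}"
  shows "countable \<D>"
proof -
  define I where "I = isolated_points X"
  have Ic: "countable I" using L unfolding Lusin_space_def I_def by blast
  have t1: "t1_space X" using L Hausdorff_imp_t1_space unfolding Lusin_space_def by blast
  have dj: "D = D'" if "D \<in> \<D>" "D' \<in> \<D>" "x \<in> D" "x \<in> D'" for D D' x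
    using pd that unfolding pairwise_def disjnt_def by blast
  define D1 where "D1 = {D \<in> \<D>. D \<inter> I \<noteq> {}}"
  define D2 where "D2 = \<D> - D1"
  have "D1 \<subseteq> (\<Union>p\<in>I. {D \<in> \<D>. p \<in> D})" unfolding D1_def by blast
  moreover have "countable (\<Union>p\<in>I. {D \<in> \<D>. p \<in> D})"
  proof (rule countable_UN[OF Ic])
    fix p assume "p \<in> I"
    show "countable {D \<in> \<D>. p \<in> D}"
      by (rule subsing_countable) (use dj in blast)
  qed
  ultimately have c1: "countable D1" by (rule countable_subset)
  define c where "c = (\<lambda>D::'a set. SOME x. x \<in> D)"
  have cD: "c D \<in> D" if "D \<in> \<D>" for D
    unfolding c_def using op[OF that] by (simp add: some_in_eq)
  have cinj: "inj_on c D2"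
  proof (rule inj_onI)
    fix D D' assume h: "D \<in> D2" "D' \<in> D2" "c D = c D'"
    then have "D \<in> \<D>" "D' \<in> \<D>" unfolding D2_def by auto
    then show "D = D'" using dj[of D D' "c D"] cD h(3) by metis
  qed
  define S where "S = c ` D2"
  have Stop: "S \<subseteq> topspace X"
  proof
    fix x assume "x \<in> S"
    then obtain D where D: "D \<in> D2" "x = c D" unfolding S_def by blast
    then have "D \<in> \<D>" using D2_def by blast
    then show "x \<in> topspace X" using cD D(2) op openin_subset by blast
  qed
  have "X interior_of (X closure_of S) = {}"
  proof (rule ccontr)
    assume "X interior_of (X closure_of S) \<noteq> {}"
    then obtain z where z: "z \<in> X interior_of (X closure_of S)" by blast
    define Ob where "Ob = X interior_of (X closure_of S)"
    have Oop: "openin X Ob" unfolding Ob_def by simp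
    have OS: "Ob \<subseteq> X closure_of S" unfolding Ob_def by (rule interior_of_subset)
    have "z \<in> X closure_of S" using z OS Ob_def by blast
    then obtain s where s: "s \<in> S" "s \<in> Ob" using closure_nbhd[of z X S Ob] Oop z Ob_def by blast
    then obtain D where D: "D \<in> D2" "s = c D" unfolding S_def by blast
    have DD: "D \<in> \<D>" using D(1) D2_def by blast
    have sD: "s \<in> D" using cD[OF DD] D(2) by simp
    have "Ob \<inter> D \<subseteq> {s}"
    proof
      fix w assume w: "w \<in> Ob \<inter> D"
      show "w \<in> {s}"
      proof (rule ccontr)
        assume "w \<notin> {s}"
        have "closedin X {s}" using t1 Stop s(1) unfolding t1_space_closedin_singleton by blast
        then have Top: "openin X ((Ob \<inter> D) - {s})"
          using Oop op[OF DD] by (intro openin_diff openin_Int) auto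
        have "w \<in> (Ob \<inter> D) - {s}" using w \<open>w \<notin> {s}\<close> by blast
        moreover have "w \<in> X closure_of S" using w OS by blast
        ultimately obtain s' where s': "s' \<in> S" "s' \<in> (Ob \<inter> D) - {s}"
          using closure_nbhd[of w X S] Top by blast
        then obtain D' where D': "D' \<in> D2" "s' = c D'" unfolding S_def by blast
        have "D' \<in> \<D>" using D'(1) D2_def by blast
        then have "s' \<in> D'" using cD D'(2) by simp
        then have "D' = D" using dj[of D' D s'] \<open>D' \<in> \<D>\<close> DD s'(2) by blast
        then show False using s' D'(2) D(2) by blast
      qed
    qed
    then have "Ob \<inter> D = {s}" using s(2) sD by blast
    then have "openin X {s}" using Oop op[OF DD] by (metis openin_Int)
    then have "s \<in> I" unfolding I_def isolated_points_def using Stop s(1) by blast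
    then have "D \<in> D1" unfolding D1_def using DD sD by blast
    then show False using D(1) D2_def by blast
  qed
  then have "nowhere_dense_in X S" unfolding nowhere_dense_in_def using Stop by blast
  then have "countable S" using L unfolding Lusin_space_def by blast
  then have c2: "countable D2" unfolding S_def using cinj countable_image_inj_on by blast
  have "\<D> = D1 \<union> D2" unfolding D2_def D1_def by blast
  then show ?thesis using c1 c2 by simp
qed

lemma Lusin_K_Lindelof:
  assumes L: "Lusin_space X"
  shows "K_Lindelof X"
  unfolding K_Lindelof_def
proof (intro allI impI)
  fix \<U> assume KU: "K_family X \<U>"
  have Uop: "\<And>U. U \<in> \<U> \<Longrightarrow> openin X U" using KU unfolding K_family_def by blast
  have Ucov: "\<And>z. z \<in> topspace X \<Longrightarrow> \<exists>U\<in>\<U>. z \<in> X closure_of U"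
    using KU unfolding K_family_def by blast
  define Q where "Q = {V. openin X V \<and> V \<noteq> {} \<and> (\<exists>U\<in>\<U>. V \<subseteq> U)}"
  define P where "P = {\<D>. \<D> \<subseteq> Q \<and> pairwise disjnt \<D>}"
  have "\<forall>C\<in>chains P. \<Union>C \<in> P"
  proof
    fix C assume C: "C \<in> chains P"
    have "\<Union>C \<subseteq> Q" using C unfolding chains_def P_def by blast
    moreover have "pairwise disjnt (\<Union>C)"
    proof (rule pairwise_chain_Union)
      show "\<And>S. S \<in> C \<Longrightarrow> pairwise disjnt S" using C unfolding chains_def P_def by blast
      show "chain\<^sub>\<subseteq> C" using C unfolding chains_def by blast
    qed
    ultimately show "\<Union>C \<in> P" unfolding P_def by blast
  qed
  then obtain M where M: "M \<in> P" and Mmax: "\<And>N. N \<in> P \<Longrightarrow> M \<subseteq> N \<Longrightarrow> N = M"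
    using Zorn_Lemma[of P] by blast
  have MQ: "M \<subseteq> Q" and Mpd: "pairwise disjnt M" using M unfolding P_def by auto
  have Mc: "countable M"
  proof (rule Lusin_ccc[OF L Mpd])
    fix D assume "D \<in> M"
    then show "openin X D \<and> D \<noteq> {}" using MQ unfolding Q_def by blast
  qed
  have exu: "\<forall>D\<in>M. \<exists>U. U \<in> \<U> \<and> D \<subseteq> U" using MQ unfolding Q_def by blast
  obtain u where u0: "\<forall>D\<in>M. u D \<in> \<U> \<and> D \<subseteq> u D"
    using bchoice[OF exu] by blast
  then have u: "\<And>D. D \<in> M \<Longrightarrow> u D \<in> \<U> \<and> D \<subseteq> u D" by blast
  have MT: "\<Union>M \<subseteq> topspace X"
  proof
    fix x assume "x \<in> \<Union>M"
    then obtain D where D: "D \<in> M" "x \<in> D" by blast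
    then have "openin X D" using MQ unfolding Q_def by blast
    then show "x \<in> topspace X" using D(2) openin_subset by blast
  qed
  define V0 where "V0 = u ` M"
  have V0U: "V0 \<subseteq> \<U>" unfolding V0_def using u by blast
  have V0c: "countable V0" unfolding V0_def using Mc by simp
  have dense: "topspace X \<subseteq> X closure_of (\<Union>M)"
  proof
    fix z assume z: "z \<in> topspace X"
    show "z \<in> X closure_of (\<Union>M)"
    proof (rule ccontr)
      assume nz: "z \<notin> X closure_of (\<Union>M)"
      define Ob where "Ob = topspace X - X closure_of (\<Union>M)"
      have Oop: "openin X Ob" unfolding Ob_def by (intro openin_diff) auto
      obtain U where U: "U \<in> \<U>" "z \<in> X closure_of U" using Ucov z by blast
      have zO: "z \<in> Ob" using z nz Ob_def by blast
      obtain y where y: "y \<in> U" "y \<in> Ob" using closure_nbhd[OF U(2) Oop zO] by blast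
      define W where "W = Ob \<inter> U"
      have WQ: "W \<in> Q" unfolding Q_def W_def using Oop Uop[OF U(1)] y U(1)
        by (intro CollectI conjI openin_Int) auto
      have Wdisj: "disjnt W D" if "D \<in> M" for D
      proof -
        have "D \<subseteq> \<Union>M" using that by blast
        then have "D \<subseteq> X closure_of (\<Union>M)" using closure_of_subset[OF MT] by blast
        then show ?thesis unfolding disjnt_def W_def Ob_def by blast
      qed
      have "insert W M \<in> P"
        unfolding P_def
      proof (intro CollectI conjI)
        show "insert W M \<subseteq> Q" using WQ MQ by blast
        show "pairwise disjnt (insert W M)"
          using Mpd Wdisj by (simp add: pairwise_insert disjnt_sym)
      qed
      then have "insert W M = M" using Mmax by blast
      then have "W \<in> M" by blast
      then have "disjnt W W" using Wdisj by blast
      then show False using y unfolding W_def disjnt_def by blast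
    qed
  qed
  have UMV: "\<Union>M \<subseteq> \<Union>V0" unfolding V0_def using u by blast
  have clV0: "X closure_of (\<Union>V0) = topspace X"
  proof (rule subset_antisym)
    show "X closure_of (\<Union>V0) \<subseteq> topspace X" by (rule closure_of_subset_topspace)
    show "topspace X \<subseteq> X closure_of (\<Union>V0)" using dense closure_of_mono[OF UMV] by (rule subset_trans)
  qed
  have V0op: "openin X (\<Union>V0)" using V0U Uop by (intro openin_Union) auto
  define N where "N = topspace X - (\<Union>V\<in>V0. X closure_of V)"
  have NC: "N \<subseteq> topspace X - \<Union>V0"
  proof
    fix n assume n: "n \<in> N"
    show "n \<in> topspace X - \<Union>V0"
    proof
      show "n \<in> topspace X" using n N_def by blast
      show "n \<notin> \<Union>V0"
      proof
        assume "n \<in> \<Union>V0"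
        then obtain V where V: "V \<in> V0" "n \<in> V" by blast
        have "openin X V" using V(1) V0U Uop by blast
        then have "V \<subseteq> X closure_of V" using closure_of_subset[OF openin_subset] by blast
        then show False using n V N_def by blast
      qed
    qed
  qed
  have "X closure_of N \<subseteq> topspace X - \<Union>V0"
    using NC V0op by (intro closure_of_minimal) auto
  then have "X interior_of (X closure_of N) \<subseteq> X interior_of (topspace X - \<Union>V0)"
    by (rule interior_of_mono)
  also have "\<dots> = topspace X - X closure_of (\<Union>V0)" by (rule interior_of_complement)
  also have "\<dots> = {}" using clV0 by simp
  finally have "X interior_of (X closure_of N) = {}" by blast
  moreover have "N \<subseteq> topspace X" unfolding N_def by blast
  ultimately have "nowhere_dense_in X N" unfolding nowhere_dense_in_def by blast
  then have Nc: "countable N" using L unfolding Lusin_space_def by blast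
  have exw: "\<forall>n\<in>N. \<exists>U. U \<in> \<U> \<and> n \<in> X closure_of U" using Ucov N_def by blast
  obtain w where w0: "\<forall>n\<in>N. w n \<in> \<U> \<and> n \<in> X closure_of (w n)"
    using bchoice[OF exw] by blast
  then have w: "\<And>n. n \<in> N \<Longrightarrow> w n \<in> \<U> \<and> n \<in> X closure_of (w n)" by blast
  define \<V> where "\<V> = V0 \<union> w ` N"
  have "\<V> \<subseteq> \<U>" unfolding \<V>_def using V0U w by blast
  moreover have "countable \<V>" unfolding \<V>_def using V0c Nc by simp
  moreover have "K_family X \<V>"
    unfolding K_family_def
  proof (intro conjI)
    show "\<forall>U\<in>\<V>. openin X U" using \<open>\<V> \<subseteq> \<U>\<close> Uop by blast
    show "topspace X = \<Union>{X closure_of U |U. U \<in> \<V>}"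
    proof (rule subset_antisym)
      show "topspace X \<subseteq> \<Union>{X closure_of U |U. U \<in> \<V>}"
      proof
        fix z assume z: "z \<in> topspace X"
        show "z \<in> \<Union>{X closure_of U |U. U \<in> \<V>}"
        proof (cases "z \<in> N")
          case True
          then have "w z \<in> \<V>" "z \<in> X closure_of (w z)" using w unfolding \<V>_def by auto
          then show ?thesis by blast
        next
          case False
          then obtain V where "V \<in> V0" "z \<in> X closure_of V" using z N_def by blast
          then show ?thesis unfolding \<V>_def by blast
        qed
      qed
      show "\<Union>{X closure_of U |U. U \<in> \<V>} \<subseteq> topspace X"
        by (auto dest: closure_of_subset_topspace[THEN subsetD])
    qed
  qed
  ultimately show "\<exists>\<V>. \<V> \<subseteq> \<U> \<and> countable \<V> \<and> K_family X \<V>" by blast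
qed

theorem corollary3p3:
  fixes X :: "'a topology"
  assumes "uncountable (topspace X)"
    and "regular_space X" and "Hausdorff_space X"
    and "open_Whyburn X"
  shows "K_Lindelof X \<longleftrightarrow> Lusin_space X"
proof
  assume KL: "K_Lindelof X"
  show "Lusin_space X"
    unfolding Lusin_space_def
    using assms KL nowhere_dense_countable isolated_countable by blast
next
  assume "Lusin_space X"
  then show "K_Lindelof X" by (rule Lusin_K_Lindelof)
qed

end
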